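(* In the linear model described in the context, for all $\alpha\in[0,1]$ a minimizer of $\mathcal R(f)$ subject to $\mathcal U(f)\le\alpha\,\mathcal U(f^* )$ is given for all $(\boldsymbol x,s)\in\mathbb R^p\times[K]$ by $$f^*_\alpha(\boldsymbol x,s)=\langle\boldsymbol x,\boldsymbol\beta^*\rangle+\sqrt\alpha\,b^*_s+(1-\sqrt\alpha)\sum_{s'=1}^Kw_{s'}b^*_{s'}.$$
   Context: Model: $Y=\langle\boldsymbol X,\boldsymbol\beta^*\rangle+b^*_S+\xi$ with $\boldsymbol\beta^*\in\mathbb R^p$, $\boldsymbol b^*\in\mathbb R^K$, $\boldsymbol X\sim\mathcal N(\boldsymbol0,\boldsymbol\Sigma)$, $\boldsymbol\Sigma$ symmetric positive definite, $\boldsymbol X$ independent of $S\in[K]$, $\xi\sim\mathcal N(0,\sigma^2)$ independent; $f^*(\boldsymbol x,s)=\langle\boldsymbol x,\boldsymbol\beta^*\rangle+b^*_s$. Weights $\boldsymbol w\in\Delta^{K-1}$. $\mathcal R(f)=\sum_sw_s\mathbb E(f^*(\boldsymbol X,s)-f(\boldsymbol X,s))^2$ and $\mathcal U(f)=\min_{\nu\in\mathcal P_2(\mathbb R)}\sum_sw_s\mathsf W_2^2(\mathrm{Law}(f(\boldsymbol X,s)),\nu)$, with $\boldsymbol X\sim\mathcal N(\boldsymbol0,\boldsymbol\Sigma)$ and $\mathsf W_2$ the Wasserstein-2 distance. *)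

theory Defs
  imports "HOL-Probability.Probability"
begin

text \<open>Centered multivariate Gaussian law with covariance matrix Sig on real^'p,
  defined via one-dimensional projections (Cramer--Wold): every linear functional
  x \<mapsto> v\<bullet>x is N(0, v\<bullet>(Sig v)) (degenerate at 0 if the variance is 0).\<close>
definition gaussian_measure :: "(real^'p) measure \<Rightarrow> real^'p^'p \<Rightarrow> bool" where
  "gaussian_measure M Sig \<longleftrightarrow> prob_space M \<and> sets M = sets borel \<and>
     (\<forall>v. distr M borel (\<lambda>x. v \<bullet> x) =
        (if v \<bullet> (Sig *v v) = 0 then return borel 0
         else density lborel (normal_density 0 (sqrt (v \<bullet> (Sig *v v))))))"

definition couplings :: "real measure \<Rightarrow> real measure \<Rightarrow> (real \<times> real) measure set" where
  "couplings M N = {P. prob_space P \<and> sets P = sets (borel \<Otimes>\<^sub>M borel) \<and>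
      distr P borel fst = M \<and> distr P borel snd = N}"

definition W2sq :: "real measure \<Rightarrow> real measure \<Rightarrow> ennreal" where
  "W2sq M N = (INF P\<in>couplings M N. \<integral>\<^sup>+ z. ennreal ((fst z - snd z)^2) \<partial>P)"

definition P2 :: "real measure set" where
  "P2 = {N. prob_space N \<and> sets N = sets borel \<and> (\<integral>\<^sup>+ x. ennreal (x^2) \<partial>N) < \<infinity>}"

definition risk :: "(real^'p) measure \<Rightarrow> ('k::finite \<Rightarrow> real) \<Rightarrow>
     (real^'p \<Rightarrow> 'k \<Rightarrow> real) \<Rightarrow> (real^'p \<Rightarrow> 'k \<Rightarrow> real) \<Rightarrow> ennreal" where
  "risk M w fs f = (\<Sum>s\<in>UNIV. ennreal (w s) * (\<integral>\<^sup>+ x. ennreal ((fs x s - f x s)^2) \<partial>M))"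

definition unfairness :: "(real^'p) measure \<Rightarrow> ('k::finite \<Rightarrow> real) \<Rightarrow>
     (real^'p \<Rightarrow> 'k \<Rightarrow> real) \<Rightarrow> ennreal" where
  "unfairness M w f = (INF N\<in>P2. \<Sum>s\<in>UNIV. ennreal (w s) * W2sq (distr M borel (\<lambda>x. f x s)) N)"

end

theory Submission
  imports Defs
begin


lemma core:
  fixes Y Z :: "'a \<Rightarrow> real"
  assumes P: "prob_space P" and Y[measurable]: "Y \<in> borel_measurable P"
    and Z[measurable]: "Z \<in> borel_measurable P"
    and fin: "(\<integral>\<^sup>+x. ennreal ((Z x)^2) \<partial>P) < \<infinity>"
  shows "ennreal ((integral\<^sup>L P Y - integral\<^sup>L P Z)^2) \<le> (\<integral>\<^sup>+x. ennreal ((Y x - Z x)^2) \<partial>P)"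
proof (cases "(\<integral>\<^sup>+x. ennreal ((Y x - Z x)^2) \<partial>P) = \<infinity>")
  case True then show ?thesis by simp
next
  case False
  interpret prob_space P by (rule P)
  define D where "D x = Y x - Z x" for x
  have Dm[measurable]: "D \<in> borel_measurable P" unfolding D_def by measurable
  have iD2: "integrable P (\<lambda>x. (D x)^2)"
    using False by (subst integrable_iff_bounded) (auto simp: D_def top.not_eq_extremum)
  have iZ2: "integrable P (\<lambda>x. (Z x)^2)"
    using fin by (subst integrable_iff_bounded) auto
  have iD: "integrable P D" by (rule square_integrable_imp_integrable[OF Dm iD2])
  have iZ: "integrable P Z" by (rule square_integrable_imp_integrable[OF Z iZ2])
  have YDZ: "Y = (\<lambda>x. D x + Z x)" by (auto simp: D_def)
  have iY: "integrable P Y" using iD iZ YDZ by simp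
  have e: "integral\<^sup>L P Y - integral\<^sup>L P Z = integral\<^sup>L P D"
    unfolding D_def using iY iZ by simp
  have "0 \<le> variance D" by (rule variance_positive)
  then have j: "(integral\<^sup>L P D)^2 \<le> integral\<^sup>L P (\<lambda>x. (D x)^2)"
    using variance_eq[OF iD iD2] by simp
  have "(\<integral>\<^sup>+x. ennreal ((Y x - Z x)^2) \<partial>P) = integral\<^sup>L P (\<lambda>x. (D x)^2)"
    unfolding D_def[symmetric] by (rule nn_integral_eq_integral[OF iD2]) auto
  then show ?thesis using j e by (simp add: ennreal_leI)
qed


lemma W2_lower:
  fixes F :: "'a \<Rightarrow> real"
  assumes M: "prob_space M" and F: "F \<in> borel_measurable M" and N: "N \<in> P2"
  shows "ennreal ((integral\<^sup>L M F - integral\<^sup>L N (\<lambda>z. z))^2) \<le> W2sq (distr M borel F) N"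
  unfolding W2sq_def
proof (rule INF_greatest)
  fix P assume "P \<in> couplings (distr M borel F) N"
  then have P: "prob_space P" and sP: "sets P = sets (borel \<Otimes>\<^sub>M borel)"
    and d1: "distr P borel fst = distr M borel F" and d2: "distr P borel snd = N"
    unfolding couplings_def by auto
  have mP: "measurable P borel = measurable (borel \<Otimes>\<^sub>M borel) (borel::real measure)"
    by (rule measurable_cong_sets[OF sP]) simp
  have fm: "fst \<in> borel_measurable P" and sm: "snd \<in> borel_measurable P"
    unfolding mP by measurable
  have sN: "sets N = sets borel" and finN: "(\<integral>\<^sup>+ x. ennreal (x^2) \<partial>N) < \<infinity>"
    using N unfolding P2_def by auto
  have "(\<integral>\<^sup>+z. ennreal ((snd z)^2) \<partial>P) = (\<integral>\<^sup>+ x. ennreal (x^2) \<partial>distr P borel snd)"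
    by (rule nn_integral_distr[symmetric, OF sm]) simp
  with finN d2 have fin: "(\<integral>\<^sup>+z. ennreal ((snd z)^2) \<partial>P) < \<infinity>" by simp
  have i1: "integral\<^sup>L P fst = integral\<^sup>L M F"
  proof -
    have "integral\<^sup>L P fst = integral\<^sup>L (distr P borel fst) (\<lambda>z. z)"
      by (rule integral_distr[symmetric, OF fm]) simp
    also have "\<dots> = integral\<^sup>L M F" unfolding d1
      by (subst integral_distr[OF F]) simp_all
    finally show ?thesis .
  qed
  have i2: "integral\<^sup>L P snd = integral\<^sup>L N (\<lambda>z. z)"
    by (subst d2[symmetric], subst integral_distr[OF sm]) simp_all
  have "ennreal ((integral\<^sup>L P fst - integral\<^sup>L P snd)^2) \<le> (\<integral>\<^sup>+z. ennreal ((fst z - snd z)^2) \<partial>P)"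
    by (rule core[OF P fm sm fin])
  then show "ennreal ((integral\<^sup>L M F - integral\<^sup>L N (\<lambda>z. z))^2) \<le> (\<integral>\<^sup>+z. ennreal ((fst z - snd z)^2) \<partial>P)"
    using i1 i2 by simp
qed

lemma W2_upper:
  fixes F G :: "'a \<Rightarrow> real"
  assumes M: "prob_space M" and F[measurable]: "F \<in> borel_measurable M"
    and G[measurable]: "G \<in> borel_measurable M"
  shows "W2sq (distr M borel F) (distr M borel G) \<le> (\<integral>\<^sup>+x. ennreal ((F x - G x)^2) \<partial>M)"
proof -
  let ?P = "distr M (borel \<Otimes>\<^sub>M borel) (\<lambda>x. (F x, G x))"
  have pm: "(\<lambda>x. (F x, G x)) \<in> measurable M (borel \<Otimes>\<^sub>M borel)" by measurable
  have "?P \<in> couplings (distr M borel F) (distr M borel G)"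
    unfolding couplings_def
    using prob_space.prob_space_distr[OF M pm] pm
    by (auto simp: distr_distr comp_def)
  then have "W2sq (distr M borel F) (distr M borel G) \<le> (\<integral>\<^sup>+ z. ennreal ((fst z - snd z)^2) \<partial>?P)"
    unfolding W2sq_def by (rule INF_lower)
  also have "\<dots> = (\<integral>\<^sup>+x. ennreal ((F x - G x)^2) \<partial>M)"
    by (subst nn_integral_distr[OF pm]) simp_all
  finally show ?thesis .
qed


lemma gauss_fin:
  fixes Sig :: "real^'p^'p" and M :: "(real^'p) measure" and beta :: "real^'p"
  assumes G: "gaussian_measure M Sig" and pos: "\<forall>v. v \<noteq> 0 \<longrightarrow> 0 < v \<bullet> (Sig *v v)"
  shows "(\<integral>\<^sup>+x. ennreal ((x \<bullet> beta)^2) \<partial>M) < \<infinity>"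
proof -
  have sM: "sets M = sets borel" using G unfolding gaussian_measure_def by auto
  have mM: "measurable M (borel::real measure) = measurable borel borel"
    by (rule measurable_cong_sets[OF sM]) simp
  have bm: "(\<lambda>x. beta \<bullet> x) \<in> borel_measurable M" unfolding mM by measurable
  have d: "distr M borel (\<lambda>x. beta \<bullet> x) =
        (if beta \<bullet> (Sig *v beta) = 0 then return borel 0
         else density lborel (normal_density 0 (sqrt (beta \<bullet> (Sig *v beta)))))"
    using G unfolding gaussian_measure_def by blast
  have "(\<integral>\<^sup>+x. ennreal ((x \<bullet> beta)^2) \<partial>M) = (\<integral>\<^sup>+y. ennreal (y^2) \<partial>distr M borel (\<lambda>x. beta \<bullet> x))"
    by (subst nn_integral_distr[OF bm]) (simp_all add: inner_commute)
  also have "\<dots> < \<infinity>"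
  proof (cases "beta \<bullet> (Sig *v beta) = 0")
    case True then show ?thesis using d by (simp add: nn_integral_return)
  next
    case False
    define sg where "sg = sqrt (beta \<bullet> (Sig *v beta))"
    have "beta \<noteq> 0" using False by auto
    then have sgp: "0 < sg" using pos unfolding sg_def by auto
    have "(\<integral>\<^sup>+y. ennreal (y^2) \<partial>distr M borel (\<lambda>x. beta \<bullet> x))
        = (\<integral>\<^sup>+y. ennreal (y^2) \<partial>density lborel (normal_density 0 sg))"
      using d False by (simp add: sg_def)
    also have "\<dots> = (\<integral>\<^sup>+y. ennreal (normal_density 0 sg y * (y - 0)^2) \<partial>lborel)"
      apply (subst nn_integral_density)
        apply simp_all
      apply (rule nn_integral_cong)
      apply (subst ennreal_mult)
        apply simp_all
      done
    also have "\<dots> = ennreal (\<integral>y. normal_density 0 sg y * (y - 0)^2 \<partial>lborel)"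
      by (rule nn_integral_eq_integral[OF integrable_normal_moment[OF sgp]]) (auto intro!: mult_nonneg_nonneg)
    also have "\<dots> < \<infinity>" by simp
    finally show ?thesis .
  qed
  finally show ?thesis .
qed


lemma var_decomp:
  fixes w m :: "'k::finite \<Rightarrow> real" and n :: real
  assumes w1: "(\<Sum>s\<in>UNIV. w s) = 1"
  shows "(\<Sum>s\<in>UNIV. w s * (m s - n)^2) =
     (\<Sum>s\<in>UNIV. w s * (m s - (\<Sum>t\<in>UNIV. w t * m t))^2) + ((\<Sum>t\<in>UNIV. w t * m t) - n)^2"
proof -
  define mb where "mb = (\<Sum>t\<in>UNIV. w t * m t)"
  have e: "\<And>s. w s * (m s - n)^2 = w s * (m s - mb)^2 + 2 * (mb - n) * (w s * m s) - 2 * (mb - n) * mb * w s + (mb - n)^2 * w s"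
    by (simp add: power2_eq_square algebra_simps)
  have "(\<Sum>s\<in>UNIV. w s * (m s - n)^2) = (\<Sum>s\<in>UNIV. w s * (m s - mb)^2) + 2 * (mb - n) * (\<Sum>s\<in>UNIV. w s * m s) - 2 * (mb - n) * mb * (\<Sum>s\<in>UNIV. w s) + (mb - n)^2 * (\<Sum>s\<in>UNIV. w s)"
    unfolding e by (simp add: sum.distrib sum_subtractf sum_distrib_left)
  also have "\<dots> = (\<Sum>s\<in>UNIV. w s * (m s - mb)^2) + (mb - n)^2"
    using w1 unfolding mb_def[symmetric] by simp
  finally show ?thesis unfolding mb_def .
qed

lemma final_ineq:
  fixes w p q :: "'k::finite \<Rightarrow> real" and alpha :: real
  assumes w0: "\<forall>s. 0 \<le> w s" and w1: "(\<Sum>s\<in>UNIV. w s) = 1"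
    and a0: "0 \<le> alpha" and a1: "alpha \<le> 1"
    and h: "(\<Sum>s\<in>UNIV. w s * (q s - (\<Sum>t\<in>UNIV. w t * q t))^2)
            \<le> alpha * (\<Sum>s\<in>UNIV. w s * (p s - (\<Sum>t\<in>UNIV. w t * p t))^2)"
  shows "(1 - sqrt alpha)^2 * (\<Sum>s\<in>UNIV. w s * (p s - (\<Sum>t\<in>UNIV. w t * p t))^2)
          \<le> (\<Sum>s\<in>UNIV. w s * (p s - q s)^2)"
proof -
  define pb where "pb = (\<Sum>t\<in>UNIV. w t * p t)"
  define qb where "qb = (\<Sum>t\<in>UNIV. w t * q t)"
  define A :: "real^'k" where "A = (\<chi> s. sqrt (w s) * (p s - pb))"
  define C :: "real^'k" where "C = (\<chi> s. sqrt (w s) * (q s - qb))"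
  have nsq: "\<And>x::real^'k. (norm x)^2 = (\<Sum>s\<in>UNIV. (x $ s)^2)"
    by (subst power2_norm_eq_inner) (simp add: inner_vec_def power2_eq_square)
  have sq: "\<And>s y. (sqrt (w s) * y)^2 = w s * y^2"
    using w0 by (simp add: power_mult_distrib)
  have nA: "(norm A)^2 = (\<Sum>s\<in>UNIV. w s * (p s - pb)^2)"
    unfolding nsq A_def by (simp add: sq)
  have nC: "(norm C)^2 = (\<Sum>s\<in>UNIV. w s * (q s - qb)^2)"
    unfolding nsq C_def by (simp add: sq)
  have nAC: "(norm (A - C))^2 = (\<Sum>s\<in>UNIV. w s * ((p s - q s) - (pb - qb))^2)"
    unfolding nsq A_def C_def
    by (simp add: sq[symmetric] algebra_simps)
  have mb: "(\<Sum>t\<in>UNIV. w t * (p t - q t)) = pb - qb"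
    unfolding pb_def qb_def by (simp add: algebra_simps sum_subtractf)
  have dec: "(\<Sum>s\<in>UNIV. w s * (p s - q s)^2) = (norm (A - C))^2 + (pb - qb)^2"
    using var_decomp[OF w1, of "\<lambda>s. p s - q s" 0] unfolding mb nAC by simp
  have "(norm C)^2 \<le> alpha * (norm A)^2" using h unfolding nA nC pb_def qb_def .
  then have "sqrt ((norm C)^2) \<le> sqrt (alpha * (norm A)^2)" by (rule real_sqrt_le_mono)
  then have nCle: "norm C \<le> sqrt alpha * norm A" by (simp add: real_sqrt_mult)
  have sa: "sqrt alpha \<le> 1" using a1 by simp
  have "(1 - sqrt alpha) * norm A \<le> norm A - norm C" using nCle by (simp add: algebra_simps)
  also have "\<dots> \<le> norm (A - C)" by (rule norm_triangle_ineq2)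
  finally have t: "(1 - sqrt alpha) * norm A \<le> norm (A - C)" .
  have "0 \<le> (1 - sqrt alpha) * norm A" using sa by simp
  then have "((1 - sqrt alpha) * norm A)^2 \<le> (norm (A - C))^2" using t by (intro power_mono) auto
  then have "(1 - sqrt alpha)^2 * (norm A)^2 \<le> (norm (A - C))^2" by (simp add: power_mult_distrib)
  then show ?thesis unfolding dec nA pb_def[symmetric] by (smt (verit) zero_le_power2)
qed


lemma L2_facts:
  fixes g :: "'a \<Rightarrow> real"
  assumes M: "prob_space M" and g[measurable]: "g \<in> borel_measurable M"
    and fin: "(\<integral>\<^sup>+x. ennreal ((g x)^2) \<partial>M) < \<infinity>"
  shows "integrable M g" and "(\<integral>\<^sup>+x. ennreal ((g x + k)^2) \<partial>M) < \<infinity>"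
proof -
  interpret prob_space M by (rule M)
  have i2: "integrable M (\<lambda>x. (g x)^2)"
    using fin by (subst integrable_iff_bounded) auto
  show ig: "integrable M g" by (rule square_integrable_imp_integrable[OF g i2])
  have e: "(\<lambda>x. (g x + k)^2) = (\<lambda>x. (g x)^2 + 2 * k * g x + k^2)"
    by (auto simp: power2_eq_square algebra_simps)
  have "integrable M (\<lambda>x. (g x + k)^2)" unfolding e using i2 ig by simp
  then show "(\<integral>\<^sup>+x. ennreal ((g x + k)^2) \<partial>M) < \<infinity>"
    by (subst (asm) integrable_iff_bounded) auto
qed

lemma U_lower:
  fixes M :: "(real^'p) measure" and f :: "real^'p \<Rightarrow> 'k::finite \<Rightarrow> real" and w :: "'k \<Rightarrow> real"
  assumes M: "prob_space M" and fm: "\<forall>s. (\<lambda>x. f x s) \<in> borel_measurable M"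
    and w0: "\<forall>s. 0 \<le> w s" and w1: "(\<Sum>s\<in>UNIV. w s) = 1"
  shows "ennreal (\<Sum>s\<in>UNIV. w s * ((\<integral>x. f x s \<partial>M) - (\<Sum>t\<in>UNIV. w t * (\<integral>x. f x t \<partial>M)))^2)
          \<le> unfairness M w f"
  unfolding unfairness_def
proof (rule INF_greatest)
  fix N assume N: "N \<in> P2"
  define m where "m s = (\<integral>x. f x s \<partial>M)" for s
  define n where "n = integral\<^sup>L N (\<lambda>z. z)"
  have "ennreal (\<Sum>s\<in>UNIV. w s * (m s - (\<Sum>t\<in>UNIV. w t * m t))^2)
      \<le> ennreal (\<Sum>s\<in>UNIV. w s * (m s - n)^2)"
    using var_decomp[OF w1, of m n] by (intro ennreal_leI) simp
  also have "\<dots> = (\<Sum>s\<in>UNIV. ennreal (w s) * ennreal ((m s - n)^2))"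
    using w0 by (subst sum_ennreal[symmetric]) (auto simp: ennreal_mult)
  also have "\<dots> \<le> (\<Sum>s\<in>UNIV. ennreal (w s) * W2sq (distr M borel (\<lambda>x. f x s)) N)"
    unfolding m_def n_def
    by (intro sum_mono mult_left_mono W2_lower[OF M _ N]) (use fm in auto)
  finally show "ennreal (\<Sum>s\<in>UNIV. w s * ((\<integral>x. f x s \<partial>M) - (\<Sum>t\<in>UNIV. w t * (\<integral>x. f x t \<partial>M)))^2)
      \<le> (\<Sum>s\<in>UNIV. ennreal (w s) * W2sq (distr M borel (\<lambda>x. f x s)) N)"
    unfolding m_def .
qed

lemma U_upper:
  fixes M :: "(real^'p) measure" and f :: "real^'p \<Rightarrow> 'k::finite \<Rightarrow> real" and w c :: "'k \<Rightarrow> real"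
  assumes M: "prob_space M" and g[measurable]: "g \<in> borel_measurable M"
    and fin: "(\<integral>\<^sup>+x. ennreal ((g x)^2) \<partial>M) < \<infinity>"
    and w0: "\<forall>s. 0 \<le> w s" and fe: "\<forall>x s. f x s = g x + c s"
  shows "unfairness M w f \<le> ennreal (\<Sum>s\<in>UNIV. w s * (c s - k)^2)"
proof -
  interpret prob_space M by (rule M)
  let ?N = "distr M borel (\<lambda>x. g x + k)"
  have gk[measurable]: "(\<lambda>x. g x + k) \<in> borel_measurable M" by measurable
  have "?N \<in> P2"
    unfolding P2_def
    using prob_space_distr[OF gk] L2_facts(2)[OF M g fin, of k]
    by (simp add: nn_integral_distr)
  then have "unfairness M w f \<le> (\<Sum>s\<in>UNIV. ennreal (w s) * W2sq (distr M borel (\<lambda>x. f x s)) ?N)"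
    unfolding unfairness_def by (rule INF_lower)
  also have "\<dots> \<le> (\<Sum>s\<in>UNIV. ennreal (w s) * (\<integral>\<^sup>+x. ennreal ((g x + c s - (g x + k))^2) \<partial>M))"
  proof (intro sum_mono mult_left_mono)
    fix s
    have fe': "f = (\<lambda>x s. g x + c s)" using fe by auto
    show "W2sq (distr M borel (\<lambda>x. f x s)) ?N \<le> (\<integral>\<^sup>+x. ennreal ((g x + c s - (g x + k))^2) \<partial>M)"
      unfolding fe' by (rule W2_upper[OF M]) auto
  qed auto
  also have "\<dots> = (\<Sum>s\<in>UNIV. ennreal (w s) * ennreal ((c s - k)^2))"
    by (simp add: emeasure_space_1)
  also have "\<dots> = ennreal (\<Sum>s\<in>UNIV. w s * (c s - k)^2)"
    using w0 by (subst sum_ennreal[symmetric]) (auto simp: ennreal_mult)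
  finally show ?thesis .
qed


theorem proposition5:
  fixes Sig :: "real^'p^'p" and M :: "(real^'p) measure" and beta :: "real^'p"
    and b w :: "'k::finite \<Rightarrow> real" and alpha :: real
  assumes "transpose Sig = Sig"
    and "\<forall>v. v \<noteq> 0 \<longrightarrow> 0 < v \<bullet> (Sig *v v)"
    and "gaussian_measure M Sig"
    and "\<forall>s. 0 \<le> w s" and "(\<Sum>s\<in>UNIV. w s) = 1"
    and "0 \<le> alpha" and "alpha \<le> 1"
  shows "let fs = (\<lambda>x s. x \<bullet> beta + b s);
             fa = (\<lambda>x s. x \<bullet> beta + sqrt alpha * b s + (1 - sqrt alpha) * (\<Sum>s'\<in>UNIV. w s' * b s'))
         in (\<forall>s. (\<lambda>x. fa x s) \<in> borel_measurable borel)
          \<and> unfairness M w fa \<le> ennreal alpha * unfairness M w fs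
          \<and> (\<forall>f. (\<forall>s. (\<lambda>x. f x s) \<in> borel_measurable borel) \<and>
                  unfairness M w f \<le> ennreal alpha * unfairness M w fs
                  \<longrightarrow> risk M w fs fa \<le> risk M w fs f)"
proof -
  note pos = assms(2) and G = assms(3) and w0 = assms(4) and w1 = assms(5)
    and a0 = assms(6) and a1 = assms(7)
  have M: "prob_space M" and sM: "sets M = sets borel" using G unfolding gaussian_measure_def by auto
  interpret prob_space M by (rule M)
  have mM: "measurable M (borel::real measure) = measurable borel borel"
    by (rule measurable_cong_sets[OF sM]) simp
  define g where "g x = x \<bullet> beta" for x
  have gm: "g \<in> borel_measurable M" unfolding mM g_def by measurable
  have fin: "(\<integral>\<^sup>+x. ennreal ((g x)^2) \<partial>M) < \<infinity>" unfolding g_def by (rule gauss_fin[OF G pos])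
  have ig: "integrable M g" by (rule L2_facts(1)[OF M gm fin])
  define Eg where "Eg = integral\<^sup>L M g"
  define bb where "bb = (\<Sum>s\<in>UNIV. w s * b s)"
  define D where "D = (\<Sum>s\<in>UNIV. w s * (b s - bb)^2)"
  have D0: "0 \<le> D" unfolding D_def using w0 by (auto intro!: sum_nonneg)
  define fs where "fs = (\<lambda>x s. x \<bullet> beta + b s)"
  define fa where "fa = (\<lambda>x s. x \<bullet> beta + sqrt alpha * b s + (1 - sqrt alpha) * (\<Sum>s'\<in>UNIV. w s' * b s'))"
  have sw: "\<And>c. (\<Sum>t\<in>UNIV. w t * (c + b t)) = c + bb"
    unfolding bb_def using w1 by (simp add: algebra_simps sum.distrib sum_distrib_left[symmetric])
  have ifs: "\<And>s. (\<integral>x. fs x s \<partial>M) = Eg + b s"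
    unfolding fs_def Eg_def g_def[symmetric] using ig by (simp add: prob_space)
  have UfsU: "unfairness M w fs \<le> ennreal D"
    unfolding D_def by (rule U_upper[OF M gm fin w0]) (simp add: fs_def g_def)
  have UfsL: "ennreal D \<le> unfairness M w fs"
  proof -
    have "ennreal (\<Sum>s\<in>UNIV. w s * ((\<integral>x. fs x s \<partial>M) - (\<Sum>t\<in>UNIV. w t * (\<integral>x. fs x t \<partial>M)))^2)
          \<le> unfairness M w fs"
      by (rule U_lower[OF M _ w0 w1]) (simp add: fs_def mM)
    then show ?thesis unfolding ifs sw D_def by simp
  qed
  have m1: "\<forall>s. (\<lambda>x. fa x s) \<in> borel_measurable borel" unfolding fa_def by measurable
  have m2: "unfairness M w fa \<le> ennreal alpha * unfairness M w fs"
  proof -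
    have "unfairness M w fa \<le> ennreal (\<Sum>s\<in>UNIV. w s * ((sqrt alpha * b s + (1 - sqrt alpha) * bb) - bb)^2)"
      by (rule U_upper[OF M gm fin w0]) (simp add: fa_def g_def bb_def)
    also have "(\<Sum>s\<in>UNIV. w s * ((sqrt alpha * b s + (1 - sqrt alpha) * bb) - bb)^2) = alpha * D"
    proof -
      have "\<And>s. w s * ((sqrt alpha * b s + (1 - sqrt alpha) * bb) - bb)^2 = alpha * (w s * (b s - bb)^2)"
      proof -
        fix s
        have "(sqrt alpha * b s + (1 - sqrt alpha) * bb) - bb = sqrt alpha * (b s - bb)"
          by (simp add: algebra_simps)
        then show "w s * ((sqrt alpha * b s + (1 - sqrt alpha) * bb) - bb)^2 = alpha * (w s * (b s - bb)^2)"
          using a0 by (simp add: power_mult_distrib)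
      qed
      then show ?thesis unfolding D_def sum_distrib_left by (rule sum.cong[OF refl])
    qed
    also have "ennreal (alpha * D) = ennreal alpha * ennreal D" using a0 D0 by (simp add: ennreal_mult)
    also have "\<dots> \<le> ennreal alpha * unfairness M w fs" using UfsL by (rule mult_left_mono) simp
    finally show ?thesis .
  qed
  have m3: "\<forall>f. (\<forall>s. (\<lambda>x. f x s) \<in> borel_measurable borel) \<and>
                  unfairness M w f \<le> ennreal alpha * unfairness M w fs
                  \<longrightarrow> risk M w fs fa \<le> risk M w fs f"
  proof (intro allI impI, elim conjE)
    fix f :: "real^'p \<Rightarrow> 'k \<Rightarrow> real"
    assume fmb: "\<forall>s. (\<lambda>x. f x s) \<in> borel_measurable borel"
      and cons: "unfairness M w f \<le> ennreal alpha * unfairness M w fs"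
    have fm: "\<forall>s. (\<lambda>x. f x s) \<in> borel_measurable M" using fmb by (simp add: mM)
    define m where "m s = (\<integral>x. f x s \<partial>M)" for s
    define p where "p s = Eg + b s" for s
    have "ennreal (\<Sum>s\<in>UNIV. w s * (m s - (\<Sum>t\<in>UNIV. w t * m t))^2) \<le> unfairness M w f"
      unfolding m_def by (rule U_lower[OF M fm w0 w1])
    also have "\<dots> \<le> ennreal alpha * unfairness M w fs" by (rule cons)
    also have "\<dots> \<le> ennreal alpha * ennreal D" using UfsU by (rule mult_left_mono) simp
    also have "\<dots> = ennreal (alpha * D)" using a0 D0 by (simp add: ennreal_mult)
    finally have C: "(\<Sum>s\<in>UNIV. w s * (m s - (\<Sum>t\<in>UNIV. w t * m t))^2) \<le> alpha * D"
      using a0 D0 by (subst (asm) ennreal_le_iff) auto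
    have pD: "(\<Sum>s\<in>UNIV. w s * (p s - (\<Sum>t\<in>UNIV. w t * p t))^2) = D"
      unfolding p_def sw D_def by simp
    have key: "(1 - sqrt alpha)^2 * D \<le> (\<Sum>s\<in>UNIV. w s * (p s - m s)^2)"
      using final_ineq[OF w0 w1 a0 a1, of m p] C unfolding pD by simp
    have rfa: "risk M w fs fa = ennreal ((1 - sqrt alpha)^2 * D)"
    proof -
      have e: "\<And>x s. (fs x s - fa x s)^2 = (1 - sqrt alpha)^2 * (b s - bb)^2"
      proof -
        fix x s
        have "fs x s - fa x s = (1 - sqrt alpha) * (b s - bb)"
          unfolding fs_def fa_def bb_def[symmetric] by (simp add: algebra_simps)
        then show "(fs x s - fa x s)^2 = (1 - sqrt alpha)^2 * (b s - bb)^2"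
          by (simp add: power_mult_distrib)
      qed
      have "risk M w fs fa = (\<Sum>s\<in>UNIV. ennreal (w s) * ennreal ((1 - sqrt alpha)^2 * (b s - bb)^2))"
        unfolding risk_def e by (simp add: emeasure_space_1)
      also have "\<dots> = ennreal (\<Sum>s\<in>UNIV. w s * ((1 - sqrt alpha)^2 * (b s - bb)^2))"
        using w0 by (subst sum_ennreal[symmetric]) (auto simp: ennreal_mult)
      also have "(\<Sum>s\<in>UNIV. w s * ((1 - sqrt alpha)^2 * (b s - bb)^2)) = (1 - sqrt alpha)^2 * D"
        unfolding D_def by (simp add: sum_distrib_left algebra_simps)
      finally show ?thesis .
    qed
    have "risk M w fs fa \<le> ennreal (\<Sum>s\<in>UNIV. w s * (p s - m s)^2)"
      unfolding rfa using key by (rule ennreal_leI)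
    also have "\<dots> = (\<Sum>s\<in>UNIV. ennreal (w s) * ennreal ((p s - m s)^2))"
      using w0 by (subst sum_ennreal[symmetric]) (auto simp: ennreal_mult)
    also have "\<dots> \<le> risk M w fs f"
      unfolding risk_def
    proof (intro sum_mono mult_left_mono)
      fix s
      have Zm: "(\<lambda>x. fs x s) \<in> borel_measurable M" unfolding fs_def mM by measurable
      have Zf: "(\<integral>\<^sup>+x. ennreal ((fs x s)^2) \<partial>M) < \<infinity>"
        using L2_facts(2)[OF M gm fin, of "b s"] by (simp add: fs_def g_def)
      have "ennreal (((\<integral>x. f x s \<partial>M) - (\<integral>x. fs x s \<partial>M))^2) \<le> (\<integral>\<^sup>+x. ennreal ((f x s - fs x s)^2) \<partial>M)"
        by (rule core[OF M _ Zm Zf]) (use fm in auto)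
      then show "ennreal ((p s - m s)^2) \<le> (\<integral>\<^sup>+x. ennreal ((fs x s - f x s)^2) \<partial>M)"
        unfolding m_def p_def ifs[symmetric] by (simp add: power2_commute)
    qed auto
    finally show "risk M w fs fa \<le> risk M w fs f" .
  qed
  show ?thesis unfolding Let_def fs_def[symmetric] fa_def[symmetric] using m1 m2 m3 by blast
qed
end
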